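(* Let $S$ be a discrete set, $N\ge 1$, and let $\{P_\theta\}_{\theta}$ be a family of probability distributions on $S^N$. Let $s^1,\dots,s^L\in S^N$ be any $L$ data points, with empirical distribution $\hat P_L(s)=\frac1L\sum_{\mu=1}^L\delta_{s,s^\mu}$. For each $i\in\{1,\dots,N\}$ define the Shannon entropy of the empirical marginal $$H_i(\hat P_L)=-\sum_{s_{-i}}\hat P_L(s_{-i})\ln \hat P_L(s_{-i}),\qquad \hat P_L(s_{-i})=\sum_{s_i}\hat P_L(s).$$ Then for every parameter $\theta$, $$\mathcal{PL}_L(\theta)-\sum_{i=1}^N H_i(\hat P_L)\;\ge\; N\,\mathcal{L}_L(\theta),$$ where $\mathcal{L}_L(\theta)=\frac1L\sum_{\mu=1}^L\log P_\theta(s^\mu)$ and $\mathcal{PL}_L(\theta)=\frac1L\sum_{\mu=1}^L\sum_{i=1}^N\log P_\theta(s^\mu_i\mid s^\mu_{-i})$.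
   Context: For $s=(s_1,\dots,s_N)$ write $s_{-i}=(s_1,\dots,s_{i-1},s_{i+1},\dots,s_N)$. The conditional distribution is $P_\theta(s_i\mid s_{-i})=P_\theta(s)/\sum_{s_i}P_\theta(s)$ (assumed well defined, i.e. the marginals $P_\theta(s_{-i})=\sum_{s_i}P_\theta(s)$ are positive where needed); $\log=\ln$ is the natural logarithm, with the convention $\log 0=-\infty$ and $0\log 0=0$. $\delta_{s,s^\mu}$ is the Kronecker delta. $\mathcal{L}_L$ is the (normalised) log-likelihood and $\mathcal{PL}_L$ the pseudo-log-likelihood. *)

theory Defs
  imports "HOL-Analysis.Analysis"
begin

text \<open>Configurations s = (s_1,...,s_N) in S^N are lists of length N over the type 'a (= S).
  Sites are indexed 0..N-1.  s_{-i} is the list with position i removed.\<close>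

definition remove_at :: "nat \<Rightarrow> 'a list \<Rightarrow> 'a list" where
  "remove_at i s = take i s @ drop (Suc i) s"

definition insert_at :: "nat \<Rightarrow> 'a \<Rightarrow> 'a list \<Rightarrow> 'a list" where
  "insert_at i a r = take i r @ a # drop i r"

definition marg :: "('a list \<Rightarrow> real) \<Rightarrow> nat \<Rightarrow> 'a list \<Rightarrow> real" where
  "marg P i r = (\<Sum>\<^sub>\<infinity>a\<in>UNIV. P (insert_at i a r))"

definition cond_prob :: "('a list \<Rightarrow> real) \<Rightarrow> nat \<Rightarrow> 'a list \<Rightarrow> real" where
  "cond_prob P i s = P s / marg P i (remove_at i s)"

definition is_distr :: "nat \<Rightarrow> ('a list \<Rightarrow> real) \<Rightarrow> bool" where
  "is_distr N P \<longleftrightarrow> (\<forall>s. length s = N \<longrightarrow> P s \<ge> 0) \<and> (P has_sum 1) {s. length s = N}"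

definition emp :: "nat \<Rightarrow> (nat \<Rightarrow> 'a list) \<Rightarrow> 'a list \<Rightarrow> real" where
  "emp L dat s = (\<Sum>\<mu><L. if s = dat \<mu> then 1 else 0) / real L"

definition eln :: "real \<Rightarrow> ereal" where
  "eln x = (if x = 0 then -\<infinity> else ereal (ln x))"

text \<open>Shannon entropy of the empirical marginal on s_{-i} (0 log 0 = 0).\<close>
definition H_marg :: "nat \<Rightarrow> nat \<Rightarrow> (nat \<Rightarrow> 'a list) \<Rightarrow> nat \<Rightarrow> real" where
  "H_marg N L dat i = - (\<Sum>\<^sub>\<infinity>r\<in>{r. length r = N - 1}.
       marg (emp L dat) i r * ln (marg (emp L dat) i r))"

definition loglik :: "nat \<Rightarrow> (nat \<Rightarrow> 'a list) \<Rightarrow> ('a list \<Rightarrow> real) \<Rightarrow> ereal" where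
  "loglik L dat P = ereal (1 / real L) * (\<Sum>\<mu><L. eln (P (dat \<mu>)))"

definition pseudologlik :: "nat \<Rightarrow> nat \<Rightarrow> (nat \<Rightarrow> 'a list) \<Rightarrow> ('a list \<Rightarrow> real) \<Rightarrow> ereal" where
  "pseudologlik N L dat P =
     ereal (1 / real L) * (\<Sum>\<mu><L. \<Sum>i<N. eln (cond_prob P i (dat \<mu>)))"

end

theory Submission
  imports Defs
begin

lemma rem_ins: "i \<le> length r \<Longrightarrow> remove_at i (insert_at i a r) = r"
  by (simp add: remove_at_def insert_at_def)
lemma ins_nth: "i \<le> length r \<Longrightarrow> insert_at i a r ! i = a"
  by (simp add: insert_at_def nth_append)
lemma ins_len: "length (insert_at i a r) = Suc (length r)"
  by (simp add: insert_at_def)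
lemma ins_rem: "i < length s \<Longrightarrow> insert_at i (s!i) (remove_at i s) = s"
  by (simp add: remove_at_def insert_at_def min_def id_take_nth_drop[symmetric])
lemma rem_len: "i < length s \<Longrightarrow> length (remove_at i s) = length s - 1"
  by (simp add: remove_at_def)
lemma ins_eq: "i \<le> length r \<Longrightarrow> i < length s \<Longrightarrow>
   (insert_at i a r = s) \<longleftrightarrow> (a = s!i \<and> r = remove_at i s)"
  by (metis ins_nth ins_rem rem_ins)

lemma marg_emp:
  assumes "\<And>\<mu>. \<mu> < L \<Longrightarrow> length (dat \<mu>) = N" "i < N" "length r = N - 1"
  shows "marg (emp L dat) i r = real (card {\<mu>\<in>{..<L}. remove_at i (dat \<mu>) = r}) / real L"
proof -
  define A where "A = (\<lambda>\<mu>. dat \<mu> ! i) ` {..<L}"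
  have fA: "finite A" by (simp add: A_def)
  have eqv: "\<And>\<mu> a. \<mu> < L \<Longrightarrow> (insert_at i a r = dat \<mu>) \<longleftrightarrow> (a = dat \<mu> ! i \<and> r = remove_at i (dat \<mu>))"
    using assms by (intro ins_eq) auto
  have "marg (emp L dat) i r = (\<Sum>\<^sub>\<infinity>a\<in>A. emp L dat (insert_at i a r))"
    unfolding marg_def
  proof (rule infsum_cong_neutral)
    fix a assume "a \<in> UNIV - A"
    then show "emp L dat (insert_at i a r) = 0"
      unfolding emp_def using eqv by (auto simp: A_def intro!: sum.neutral)
  qed auto
  also have "\<dots> = (\<Sum>a\<in>A. emp L dat (insert_at i a r))" using fA by simp
  also have "\<dots> = (\<Sum>\<mu><L. \<Sum>a\<in>A. if insert_at i a r = dat \<mu> then 1 else 0) / real L"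
    unfolding emp_def by (simp add: sum_divide_distrib[symmetric] sum.swap[of _ A])
  also have "\<dots> = (\<Sum>\<mu><L. if remove_at i (dat \<mu>) = r then 1 else 0) / real L"
  proof -
    have "\<And>\<mu>. \<mu> < L \<Longrightarrow> (\<Sum>a\<in>A. if insert_at i a r = dat \<mu> then 1 else 0 :: real)
        = (if remove_at i (dat \<mu>) = r then 1 else 0)"
    proof -
      fix \<mu> assume m: "\<mu> < L"
      have "(\<Sum>a\<in>A. if insert_at i a r = dat \<mu> then 1 else 0 :: real)
          = (\<Sum>a\<in>A. if a = dat \<mu> ! i then (if remove_at i (dat \<mu>) = r then 1 else 0) else 0)"
        using eqv[OF m] by (intro sum.cong) auto
      also have "\<dots> = (if remove_at i (dat \<mu>) = r then 1 else 0)"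
        using fA m by (simp add: A_def)
      finally show "?thesis \<mu>" .
    qed
    then show ?thesis by simp
  qed
  also have "\<dots> = real (card {\<mu>\<in>{..<L}. remove_at i (dat \<mu>) = r}) / real L"
    by (simp add: sum.If_cases Int_def)
  finally show ?thesis .
qed


lemma gibbs_aux:
  fixes P :: "'a list \<Rightarrow> real"
  assumes dist: "is_distr N P"
    and len: "\<And>\<mu>. \<mu> < L \<Longrightarrow> length (dat \<mu>) = N"
    and iN: "i < N" and L1: "L \<ge> 1"
    and qpos: "\<And>\<mu>. \<mu> < L \<Longrightarrow> marg P i (remove_at i (dat \<mu>)) > 0"
  shows "H_marg N L dat i = - (\<Sum>\<mu><L. ln (marg (emp L dat) i (remove_at i (dat \<mu>)))) / real L"
    and "(\<Sum>\<mu><L. ln (marg P i (remove_at i (dat \<mu>))))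
           \<le> (\<Sum>\<mu><L. ln (marg (emp L dat) i (remove_at i (dat \<mu>))))"
proof -
  define rr where "rr \<mu> = remove_at i (dat \<mu>)" for \<mu>
  define R where "R = rr ` {..<L}"
  define c where "c r = card {\<mu>\<in>{..<L}. rr \<mu> = r}" for r
  define q where "q r = marg P i r" for r
  have fR: "finite R" by (simp add: R_def)
  have Rlen: "\<And>r. r \<in> R \<Longrightarrow> length r = N - 1"
    using len iN by (auto simp: R_def rr_def rem_len)
  have m: "\<And>r. length r = N - 1 \<Longrightarrow> marg (emp L dat) i r = real (c r) / real L"
    unfolding c_def rr_def using marg_emp[of L dat N i] len iN by blast
  have c0: "\<And>r. r \<notin> R \<Longrightarrow> c r = 0"
    by (auto simp: c_def R_def)
  have cpos: "\<And>r. r \<in> R \<Longrightarrow> c r \<ge> 1"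
  proof -
    fix r assume "r \<in> R"
    then obtain \<mu> where "\<mu> < L" "r = rr \<mu>" by (auto simp: R_def)
    then have "\<mu> \<in> {\<mu>\<in>{..<L}. rr \<mu> = r}" by auto
    then have "card {\<mu>\<in>{..<L}. rr \<mu> = r} > 0" by (auto simp: card_gt_0_iff)
    then show "c r \<ge> 1" by (simp add: c_def)
  qed
  have grp: "\<And>g::'a list \<Rightarrow> real. (\<Sum>\<mu><L. g (rr \<mu>)) = (\<Sum>r\<in>R. real (c r) * g r)"
  proof -
    fix g :: "'a list \<Rightarrow> real"
    have "(\<Sum>\<mu><L. g (rr \<mu>)) = (\<Sum>r\<in>R. \<Sum>\<mu>\<in>{\<mu>\<in>{..<L}. rr \<mu> = r}. g (rr \<mu>))"
      by (rule sum.group[symmetric]) (auto simp: R_def)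
    also have "\<dots> = (\<Sum>r\<in>R. real (c r) * g r)"
      by (intro sum.cong) (auto simp: c_def)
    finally show "?thesis g" .
  qed
  have Lpos: "real L > 0" using L1 by simp
  show "H_marg N L dat i = - (\<Sum>\<mu><L. ln (marg (emp L dat) i (remove_at i (dat \<mu>)))) / real L"
  proof -
    have "(\<Sum>\<^sub>\<infinity>r\<in>{r. length r = N - 1}. marg (emp L dat) i r * ln (marg (emp L dat) i r))
        = (\<Sum>\<^sub>\<infinity>r\<in>R. real (c r) / real L * ln (real (c r) / real L))"
    proof (rule infsum_cong_neutral)
      fix r assume "r \<in> {r. length r = N - 1} - R"
      then show "marg (emp L dat) i r * ln (marg (emp L dat) i r) = 0" using m c0 by auto
    qed (use m Rlen in auto)
    also have "\<dots> = (\<Sum>r\<in>R. real (c r) * (ln (real (c r) / real L) / real L))"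
      using fR by simp
    also have "\<dots> = (\<Sum>\<mu><L. ln (real (c (rr \<mu>)) / real L) / real L)"
      using grp[of "\<lambda>r. ln (real (c r) / real L) / real L"] by simp
    also have "\<dots> = (\<Sum>\<mu><L. ln (marg (emp L dat) i (remove_at i (dat \<mu>)))) / real L"
      using m Rlen by (auto simp: sum_divide_distrib R_def rr_def intro!: sum.cong)
    finally show ?thesis unfolding H_marg_def by simp
  qed
  have qR: "(\<Sum>r\<in>R. q r) \<le> 1"
  proof -
    define g :: "'a list \<times> 'a \<Rightarrow> 'a list" where "g = (\<lambda>(r, a). insert_at i a r)"
    have Pnn: "\<And>s. length s = N \<Longrightarrow> P s \<ge> 0" and Phs: "(P has_sum 1) {s. length s = N}"
      using dist by (auto simp: is_distr_def)
    have inj: "inj_on g (R \<times> UNIV)"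
    proof (rule inj_onI)
      fix x y assume x: "x \<in> R \<times> UNIV" and y: "y \<in> R \<times> UNIV" and e: "g x = g y"
      obtain r a where xr: "x = (r, a)" by (cases x)
      obtain r' a' where yr: "y = (r', a')" by (cases y)
      have l: "i \<le> length r" "i \<le> length r'" using x y xr yr Rlen iN by auto
      have "remove_at i (insert_at i a r) = remove_at i (insert_at i a' r')"
           "insert_at i a r ! i = insert_at i a' r' ! i"
        using e xr yr by (auto simp: g_def)
      then show "x = y" using l xr yr by (simp add: rem_ins ins_nth)
    qed
    have sub: "g ` (R \<times> UNIV) \<subseteq> {s. length s = N}"
      using Rlen iN by (auto simp: g_def ins_len)
    have Psum: "P summable_on {s. length s = N}" using Phs by (auto simp: summable_on_def)
    have Ps: "P summable_on g ` (R \<times> UNIV)" by (rule summable_on_subset_banach[OF Psum sub])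
    then have Ps2: "(P \<circ> g) summable_on (R \<times> UNIV)" using summable_on_reindex[OF inj] by blast
    have "(\<Sum>r\<in>R. q r) = (\<Sum>\<^sub>\<infinity>r\<in>R. \<Sum>\<^sub>\<infinity>a\<in>UNIV. (P \<circ> g) (r, a))"
      using fR by (simp add: q_def marg_def g_def)
    also have "\<dots> = (\<Sum>\<^sub>\<infinity>x\<in>R \<times> UNIV. (P \<circ> g) x)"
      using infsum_Sigma_banach[OF Ps2] by (simp add: comp_def)
    also have "\<dots> = (\<Sum>\<^sub>\<infinity>x\<in>g ` (R \<times> UNIV). P x)"
      using infsum_reindex[OF inj, of P] by (simp add: comp_def)
    also have "\<dots> \<le> (\<Sum>\<^sub>\<infinity>x\<in>{s. length s = N}. P x)"
      using sub Pnn by (intro infsum_mono_neutral[OF Ps Psum]) auto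
    also have "\<dots> = 1" using Phs by (rule infsumI)
    finally show ?thesis .
  qed
  show "(\<Sum>\<mu><L. ln (marg P i (remove_at i (dat \<mu>))))
           \<le> (\<Sum>\<mu><L. ln (marg (emp L dat) i (remove_at i (dat \<mu>))))"
  proof -
    have mpos: "\<And>\<mu>. \<mu> < L \<Longrightarrow> real (c (rr \<mu>)) / real L > 0"
    proof -
      fix \<mu> assume "\<mu> < L"
      then have "c (rr \<mu>) \<ge> 1" using cpos by (auto simp: R_def)
      then show "real (c (rr \<mu>)) / real L > 0" using Lpos by simp
    qed
    have mm: "\<And>\<mu>. \<mu> < L \<Longrightarrow> marg (emp L dat) i (rr \<mu>) = real (c (rr \<mu>)) / real L"
      using m Rlen by (auto simp: R_def)
    have "(\<Sum>\<mu><L. ln (q (rr \<mu>)) - ln (real (c (rr \<mu>)) / real L))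
        \<le> (\<Sum>\<mu><L. q (rr \<mu>) / (real (c (rr \<mu>)) / real L) - 1)"
    proof (rule sum_mono)
      have gen: "\<And>x y::real. x > 0 \<Longrightarrow> y > 0 \<Longrightarrow> ln x - ln y \<le> x / y - 1"
      proof -
        fix x y :: real assume "x > 0" "y > 0"
        then show "ln x - ln y \<le> x / y - 1"
          using ln_le_minus_one[of "x/y"] ln_divide_pos[of x y] by simp
      qed
      fix \<mu> assume "\<mu> \<in> {..<L}"
      then have a: "q (rr \<mu>) > 0" "real (c (rr \<mu>)) / real L > 0"
        using qpos mpos by (auto simp: q_def rr_def)
      show "ln (q (rr \<mu>)) - ln (real (c (rr \<mu>)) / real L)
          \<le> q (rr \<mu>) / (real (c (rr \<mu>)) / real L) - 1"
        using gen[OF a] .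
    qed
    also have "\<dots> = (\<Sum>r\<in>R. real (c r) * (q r / (real (c r) / real L))) - real L"
      using grp[of "\<lambda>r. q r / (real (c r) / real L)"] by (simp add: sum_subtractf)
    also have "\<dots> = (\<Sum>r\<in>R. real L * q r) - real L"
      using Lpos by (auto intro!: sum.cong dest!: cpos)
    also have "\<dots> \<le> 0" using qR Lpos by (simp add: sum_distrib_left[symmetric])
    finally show ?thesis using mm by (simp add: sum_subtractf q_def rr_def)
  qed
qed


theorem mainTheorem1:
  fixes Pfam :: "'b \<Rightarrow> 'a list \<Rightarrow> real"
    and dat :: "nat \<Rightarrow> 'a list"
    and N L :: nat
    and \<theta> :: 'b
  assumes "N \<ge> 1" and "L \<ge> 1"
    and "\<And>\<theta>. is_distr N (Pfam \<theta>)"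
    and "\<And>\<mu>. \<mu> < L \<Longrightarrow> length (dat \<mu>) = N"
    and "\<And>\<mu> i. \<mu> < L \<Longrightarrow> i < N \<Longrightarrow> marg (Pfam \<theta>) i (remove_at i (dat \<mu>)) > 0"
  shows "pseudologlik N L dat (Pfam \<theta>) - ereal (\<Sum>i<N. H_marg N L dat i)
           \<ge> ereal (real N) * loglik L dat (Pfam \<theta>)"
proof -
  define P where "P = Pfam \<theta>"
  have dist: "is_distr N P" using assms(3) by (simp add: P_def)
  have len: "\<And>\<mu>. \<mu> < L \<Longrightarrow> length (dat \<mu>) = N" by (rule assms(4))
  have qpos: "\<And>\<mu> i. \<mu> < L \<Longrightarrow> i < N \<Longrightarrow> marg P i (remove_at i (dat \<mu>)) > 0"
    using assms(5) by (simp add: P_def)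
  have Pnn: "\<And>\<mu>. \<mu> < L \<Longrightarrow> P (dat \<mu>) \<ge> 0" using dist len by (auto simp: is_distr_def)
  have Lpos: "real L > 0" using assms(2) by simp
  have Npos: "real N > 0" using assms(1) by simp
  have noinf: "\<And>x. eln x \<noteq> \<infinity>" by (simp add: eln_def)
  show ?thesis
  proof (cases "\<exists>\<mu><L. P (dat \<mu>) = 0")
    case True
    then obtain \<mu>0 where m0: "\<mu>0 < L" "P (dat \<mu>0) = 0" by blast
    have "(\<Sum>\<mu><L. eln (P (dat \<mu>))) = eln (P (dat \<mu>0)) + (\<Sum>\<mu>\<in>{..<L} - {\<mu>0}. eln (P (dat \<mu>)))"
      using m0 by (simp add: sum.remove)
    also have "\<dots> = -\<infinity>"
    proof -
      have "(\<Sum>\<mu>\<in>{..<L} - {\<mu>0}. eln (P (dat \<mu>))) \<noteq> \<infinity>"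
        using noinf by (simp add: sum_Pinfty)
      then show ?thesis using m0 by (simp add: eln_def)
    qed
    finally have "loglik L dat P = -\<infinity>" using Lpos by (simp add: loglik_def)
    then have "ereal (real N) * loglik L dat (Pfam \<theta>) = -\<infinity>" using Npos by (simp add: P_def)
    then show ?thesis by simp
  next
    case False
    then have Ppos: "\<And>\<mu>. \<mu> < L \<Longrightarrow> P (dat \<mu>) > 0" using Pnn by force
    define q where "q i \<mu> = marg P i (remove_at i (dat \<mu>))" for i \<mu>
    define m where "m i \<mu> = marg (emp L dat) i (remove_at i (dat \<mu>))" for i \<mu>
    have e1: "(\<Sum>\<mu><L. \<Sum>i<N. eln (cond_prob P i (dat \<mu>)))
        = ereal (\<Sum>\<mu><L. \<Sum>i<N. ln (P (dat \<mu>)) - ln (q i \<mu>))"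
    proof -
      have "\<And>\<mu> i. \<mu> < L \<Longrightarrow> i < N \<Longrightarrow> eln (cond_prob P i (dat \<mu>)) = ereal (ln (P (dat \<mu>)) - ln (q i \<mu>))"
      proof -
        fix \<mu> i assume a: "\<mu> < L" "i < N"
        have "P (dat \<mu>) > 0" "q i \<mu> > 0" using Ppos qpos a by (auto simp: q_def)
        then show "?thesis \<mu> i"
          by (simp add: eln_def cond_prob_def q_def[symmetric] ln_divide_pos)
      qed
      then show ?thesis by simp
    qed
    have e2: "(\<Sum>\<mu><L. eln (P (dat \<mu>))) = ereal (\<Sum>\<mu><L. ln (P (dat \<mu>)))"
    proof -
      have "(\<Sum>\<mu><L. eln (P (dat \<mu>))) = (\<Sum>\<mu><L. ereal (ln (P (dat \<mu>))))"
        using Ppos by (intro sum.cong) (auto simp: eln_def dest!: Ppos)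
      then show ?thesis by simp
    qed
    have H: "\<And>i. i < N \<Longrightarrow> H_marg N L dat i = - (\<Sum>\<mu><L. ln (m i \<mu>)) / real L"
      unfolding m_def by (rule gibbs_aux(1)[where P=P and dat=dat and L=L and N=N]) (use dist len qpos assms(2) in auto)
    have G: "\<And>i. i < N \<Longrightarrow> (\<Sum>\<mu><L. ln (q i \<mu>)) \<le> (\<Sum>\<mu><L. ln (m i \<mu>))"
      unfolding m_def q_def by (rule gibbs_aux(2)[where P=P and dat=dat and L=L and N=N]) (use dist len qpos assms(2) in auto)
    have real_ineq: "(1 / real L) * (\<Sum>\<mu><L. \<Sum>i<N. ln (P (dat \<mu>)) - ln (q i \<mu>))
         - (\<Sum>i<N. H_marg N L dat i) \<ge> real N * ((1 / real L) * (\<Sum>\<mu><L. ln (P (dat \<mu>))))"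
    proof -
      have "(\<Sum>\<mu><L. \<Sum>i<N. ln (P (dat \<mu>)) - ln (q i \<mu>))
          = real N * (\<Sum>\<mu><L. ln (P (dat \<mu>))) - (\<Sum>i<N. \<Sum>\<mu><L. ln (q i \<mu>))"
        by (simp add: sum_subtractf sum_distrib_left sum.swap[of _ "{..<N}"])
      moreover have "(\<Sum>i<N. H_marg N L dat i) = - (\<Sum>i<N. \<Sum>\<mu><L. ln (m i \<mu>)) / real L"
        using H by (simp add: sum_negf sum_divide_distrib)
      moreover have "(\<Sum>i<N. \<Sum>\<mu><L. ln (q i \<mu>)) \<le> (\<Sum>i<N. \<Sum>\<mu><L. ln (m i \<mu>))"
        by (rule sum_mono) (use G in auto)
      ultimately show ?thesis using Lpos by (simp add: field_simps)
    qed
    show ?thesis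
      unfolding pseudologlik_def loglik_def P_def[symmetric] e1 e2
      using real_ineq by simp
  qed
qed

end
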